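(* Let $0<\Delta\le\pi$ and let $f$ be a probability density on $\mathbb R$ whose characteristic function $\Phi(\omega)=\int f(t)e^{i\omega t}dt$ has support in $(-\Delta,\Delta)$ (with $f$ taken as the continuous function $f(t)=\frac1{2\pi}\int\Phi(\omega)e^{-i\omega t}d\omega$). Then the restriction of $f$ to the integers is a well-defined probability distribution on $\mathbb Z$, namely $\mathrm{prob}(k)=f(k)$ for $k\in\mathbb Z$, and its characteristic function $\Phi_{\mathbb Z}(\omega)=\sum_{k\in\mathbb Z}f(k)e^{i\omega k}$ satisfies $\Phi_{\mathbb Z}(\omega)=0$ for $|\omega|\in(\Delta,\pi]$. *)

theory Defs
  imports "HOL-Analysis.Analysis"
begin

definition char_fun :: "(real \<Rightarrow> real) \<Rightarrow> real \<Rightarrow> complex" where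
  "char_fun f \<omega> = integral\<^sup>L lborel (\<lambda>t. complex_of_real (f t) * cis (\<omega> * t))"

definition char_fun_int :: "(int \<Rightarrow> real) \<Rightarrow> real \<Rightarrow> complex" where
  "char_fun_int p \<omega> = infsum (\<lambda>k. complex_of_real (p k) * cis (\<omega> * of_int k)) UNIV"

definition prob_density :: "(real \<Rightarrow> real) \<Rightarrow> bool" where
  "prob_density f \<longleftrightarrow> f \<in> borel_measurable lborel \<and> (\<forall>t. 0 \<le> f t) \<and>
     integrable lborel f \<and> integral\<^sup>L lborel f = 1"

end

theory Submission
  imports Defs "HOL-Probability.Probability"
begin


definition E :: "nat \<Rightarrow> real \<Rightarrow> real" where "E n u = 1 + 2 * (\<Sum>k=1..n. cos (real k * u))"
definition D :: "nat \<Rightarrow> real \<Rightarrow> real" where "D N u = (\<Sum>n\<le>N. E n u)"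

lemma E_Suc: "E (Suc n) u = E n u + 2 * cos (real (Suc n) * u)"
  by (simp add: E_def algebra_simps)

lemma E_id: "(1 - cos u) * E n u = cos (real n * u) - cos (real (Suc n) * u)"
proof (induction n)
  case 0 show ?case by (simp add: E_def)
next
  case (Suc n)
  define A where "A = real (Suc n) * u"
  have e1: "real n * u = A - u" by (simp add: A_def algebra_simps)
  have e2: "real (Suc (Suc n)) * u = A + u" by (simp add: A_def algebra_simps)
  have c1: "cos (real n * u) = cos A * cos u + sin A * sin u"
    unfolding e1 by (rule cos_diff)
  have c2: "cos (real (Suc (Suc n)) * u) = cos A * cos u - sin A * sin u"
    unfolding e2 by (rule cos_add)
  have "(1 - cos u) * E (Suc n) u = (1 - cos u) * E n u + (1 - cos u) * 2 * cos A"
    by (simp add: E_Suc A_def algebra_simps)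
  also have "\<dots> = cos (real (Suc n) * u) - cos (real (Suc (Suc n)) * u)"
    unfolding Suc.IH c1 c2 A_def[symmetric] by (simp add: algebra_simps)
  finally show ?case .
qed

lemma D_id: "(1 - cos u) * D N u = 1 - cos (real (Suc N) * u)"
proof (induction N)
  case 0 show ?case by (simp add: D_def E_def)
next
  case (Suc N)
  have "(1 - cos u) * D (Suc N) u = (1 - cos u) * D N u + (1 - cos u) * E (Suc N) u"
    by (simp add: D_def algebra_simps)
  also have "\<dots> = 1 - cos (real (Suc (Suc N)) * u)"
    unfolding Suc.IH E_id by simp
  finally show ?case .
qed

lemma cis_pm: "cis a + cis (- a) = complex_of_real (2 * cos a)"
  by (simp add: complex_eq_iff)

lemma E_cis: "(\<Sum>k\<in>{- int n..int n}. cis (x * of_int k)) = complex_of_real (E n x)"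
proof (induction n)
  case 0 show ?case by (simp add: E_def)
next
  case (Suc n)
  have set: "{- int (Suc n)..int (Suc n)} = insert (int n + 1) (insert (-(int n + 1)) {- int n..int n})"
    by auto
  have "(\<Sum>k\<in>{- int (Suc n)..int (Suc n)}. cis (x * of_int k))
     = cis (x * (real n + 1)) + cis (- (x * (real n + 1))) + (\<Sum>k\<in>{- int n..int n}. cis (x * of_int k))"
    unfolding set by (simp add: algebra_simps)
  also have "\<dots> = complex_of_real (E (Suc n) x)"
    unfolding cis_pm Suc.IH by (simp add: E_Suc algebra_simps)
  finally show ?case .
qed

lemma E_zero_nonneg: "E n 0 \<ge> 0"
  by (simp add: E_def)

lemma cos_lt_1: assumes "u \<noteq> 0" "\<bar>u\<bar> \<le> 2 * pi - \<bar>u\<bar>" shows "cos u < 1"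
proof -
  have "\<bar>u\<bar> \<le> pi" using assms by simp
  have "cos \<bar>u\<bar> < cos 0"
    by (rule cos_monotone_0_pi) (use assms \<open>\<bar>u\<bar> \<le> pi\<close> in auto)
  thus ?thesis by (cases "u \<ge> 0") auto
qed

lemma cos_le_delta: assumes "0 < d" "d \<le> \<bar>u\<bar>" "\<bar>u\<bar> \<le> 2 * pi - d"
  shows "cos u \<le> cos d"
proof -
  have "cos \<bar>u\<bar> \<le> cos d"
  proof (cases "\<bar>u\<bar> \<le> pi")
    case True then show ?thesis
      by (intro cos_monotone_0_pi_le) (use assms in auto)
  next
    case False
    have "cos \<bar>u\<bar> = cos (2 * pi - \<bar>u\<bar>)" by (simp add: cos_diff)
    also have "\<dots> \<le> cos d"
      by (intro cos_monotone_0_pi_le) (use assms False in auto)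
    finally show ?thesis .
  qed
  thus ?thesis by (cases "u \<ge> 0") auto
qed

lemma D_nonneg_gen: assumes "cos u < 1" shows "D N u \<ge> 0"
proof -
  have "D N u = (1 - cos (real (Suc N) * u)) / (1 - cos u)"
    using D_id[of u N] assms by (simp add: field_simps)
  then show ?thesis using assms by simp
qed

lemma D_even: "D N (-u) = D N u"
  by (simp add: D_def E_def)

lemma D_nonneg: assumes "\<bar>u\<bar> \<le> 2 * pi - \<bar>u\<bar>" shows "D N u \<ge> 0"
proof (cases "u = 0")
  case True then show ?thesis
    by (simp add: D_def sum_nonneg E_zero_nonneg)
next
  case False
  then have c: "cos u < 1" using cos_lt_1 assms by blast
  have "D N u = (1 - cos (real (Suc N) * u)) / (1 - cos u)"
    using D_id[of u N] c by (simp add: field_simps)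
  then show ?thesis using c by simp
qed

lemma D_bound: assumes "0 < d" "d \<le> \<bar>u\<bar>" "\<bar>u\<bar> \<le> 2 * pi - d"
  shows "D N u \<le> 2 / (1 - cos d)"
proof -
  have cd: "cos d < 1"
    using cos_lt_1[of d] assms by auto
  have c: "cos u \<le> cos d" using cos_le_delta assms by blast
  have "D N u = (1 - cos (real (Suc N) * u)) / (1 - cos u)"
    using D_id[of u N] c cd by (simp add: field_simps)
  also have "\<dots> \<le> 2 / (1 - cos u)"
    by (rule divide_right_mono) (use c cd cos_ge_minus_one[of "real (Suc N) * u"] in auto)
  also have "\<dots> \<le> 2 / (1 - cos d)"
    using c cd by (intro divide_left_mono) auto
  finally show ?thesis .
qed

lemma cos_int_integral: assumes "k \<ge> 1"
  shows "((\<lambda>u. cos (real k * u)) has_integral 0) {-pi..pi}"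
proof -
  have "((\<lambda>u. cos (real k * u)) has_integral (sin (real k * pi) / real k - sin (real k * (-pi)) / real k)) {-pi..pi}"
    using assms
    by (intro fundamental_theorem_of_calculus)
       (auto intro!: derivative_eq_intros simp: has_real_derivative_iff_has_vector_derivative[symmetric])
  then show ?thesis by simp
qed

lemma E_integral: "(E n has_integral 2 * pi) {-pi..pi}"
proof -
  have one: "((\<lambda>x. 1::real) has_integral 2*pi) {-pi..pi}"
    using has_integral_const_real[of "1::real" "-pi" pi] by simp
  have "((\<lambda>u. 1 + 2 * (\<Sum>k=1..n. cos (real k * u))) has_integral (2 * pi + 2 * (\<Sum>k=1..n. 0))) {-pi..pi}"
    by (intro has_integral_add has_integral_mult_right has_integral_sum)
       (auto intro: cos_int_integral one)
  then show ?thesis by (simp add: E_def[abs_def])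
qed

lemma D_integral: "(D N has_integral (real (Suc N) * (2 * pi))) {-pi..pi}"
proof -
  have "((\<lambda>u. \<Sum>n\<le>N. E n u) has_integral (\<Sum>n\<le>N. 2 * pi)) {-pi..pi}"
    by (intro has_integral_sum E_integral) auto
  then show ?thesis by (simp add: D_def[abs_def])
qed

lemma continuous_D [continuous_intros]: "continuous_on S (D N)"
  unfolding D_def[abs_def] E_def by (intro continuous_intros)



lemma dens_prob:
  assumes "prob_density f"
  shows "prob_space (density lborel (\<lambda>t. ennreal (f t)))"
proof
  have m: "f \<in> borel_measurable lborel" and nn: "\<And>t. 0 \<le> f t" and i: "integrable lborel f"
    and one: "integral\<^sup>L lborel f = 1" using assms by (auto simp: prob_density_def)
  have "(\<integral>\<^sup>+ x. ennreal (f x) \<partial>lborel) = ennreal (integral\<^sup>L lborel f)"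
    by (rule nn_integral_eq_integral) (use i nn in auto)
  then show "emeasure (density lborel (\<lambda>t. ennreal (f t))) (space (density lborel (\<lambda>t. ennreal (f t)))) = 1"
    using m one by (simp add: emeasure_density)
qed

lemma dens_real_dist:
  assumes "prob_density f"
  shows "real_distribution (density lborel (\<lambda>t. ennreal (f t)))"
  unfolding real_distribution_def real_distribution_axioms_def
  using dens_prob[OF assms] by simp

lemma dens_char:
  assumes "prob_density f"
  shows "char (density lborel (\<lambda>t. ennreal (f t))) w = char_fun f w"
proof -
  have m: "f \<in> borel_measurable lborel" and nn: "\<And>t. 0 \<le> f t"
    using assms by (auto simp: prob_density_def)
  have "char (density lborel (\<lambda>t. ennreal (f t))) w = integral\<^sup>L lborel (\<lambda>x. f x *\<^sub>R iexp (w * x))"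
    unfolding char_def using m nn by (subst integral_density) auto
  also have "\<dots> = char_fun f w"
    unfolding char_fun_def by (simp add: scaleR_conv_of_real cis_conv_exp)
  finally show ?thesis .
qed

lemma dens_measure:
  assumes "prob_density f" "continuous_on UNIV f" "a \<le> b"
  shows "measure (density lborel (\<lambda>t. ennreal (f t))) {a<..b} = integral {a..b} f"
proof -
  have m: "f \<in> borel_measurable lborel" and nn: "\<And>t. 0 \<le> f t"
    using assms by (auto simp: prob_density_def)
  have hi: "(f has_integral integral {a..b} f) {a..b}"
    using assms(2) by (intro integrable_integral integrable_continuous_interval) (auto intro: continuous_on_subset)
  have hi2: "(f has_integral integral {a..b} f) {a<..b}"
    using hi by (rule has_integral_spike_set_eq[THEN iffD1, rotated 2])
       (auto intro: negligible_subset[of "{a}"])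
  have "emeasure (density lborel (\<lambda>t. ennreal (f t))) {a<..b} = (\<integral>\<^sup>+ x. ennreal (f x) * indicator {a<..b} x \<partial>lborel)"
    using m by (simp add: emeasure_density)
  also have "\<dots> = (\<integral>\<^sup>+ x. ennreal (indicator {a<..b} x * f x) \<partial>lborel)"
    by (intro nn_integral_cong) (auto simp: indicator_def)
  also have "\<dots> = ennreal (integral {a..b} f)"
    using nn_integral_has_integral_lebesgue[OF _ hi2] nn by simp
  finally show ?thesis
    by (simp add: measure_def) (metis enn2real_ennreal integral_nonneg hi nn has_integral_integrable integral_unique)
qed

lemma dens_single:
  assumes "prob_density f"
  shows "measure (density lborel (\<lambda>t. ennreal (f t))) {a} = 0"
proof -
  have m: "f \<in> borel_measurable lborel"
    using assms by (auto simp: prob_density_def)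
  have "emeasure (density lborel (\<lambda>t. ennreal (f t))) {a} = (\<integral>\<^sup>+ x. ennreal (f x) * indicator {a} x \<partial>lborel)"
    using m by (simp add: emeasure_density)
  also have "\<dots> = 0"
    by (rule nn_integral_null_set[of "{a}", THEN trans]) auto
  finally show ?thesis by (simp add: measure_def)
qed



lemma char_cont:
  assumes "prob_density f"
  shows "continuous_on UNIV (char_fun f)"
proof -
  have e: "char (density lborel (\<lambda>t. ennreal (f t))) = char_fun f"
    using dens_char[OF assms] by (intro ext) 
  have "isCont (char_fun f) w" for w
    using real_distribution.isCont_char[OF dens_real_dist[OF assms], of w] unfolding e .
  then show ?thesis by (simp add: continuous_at_imp_continuous_on)
qed

lemma cis_deriv:
  assumes "t \<noteq> 0"
  shows "((\<lambda>s. \<i> * cis (-(t * s)) / complex_of_real t) has_vector_derivative cis (-(t * x))) (at x within X)"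
proof -
  have "((\<lambda>s. cis (-(t * s))) has_vector_derivative (-t) *\<^sub>R (\<i> * cis (-(t * x)))) (at x within X)"
    unfolding cis_conv_exp
    by (rule vector_diff_chain_within[where g = "\<lambda>y. exp (\<i> * complex_of_real y)", unfolded o_def])
       (auto intro!: derivative_eq_intros has_vector_derivative_iexp)
  then show ?thesis using assms
    by (auto intro!: derivative_eq_intros simp: field_simps scaleR_conv_of_real)
qed

lemma cis_int:
  assumes "a \<le> b" "t \<noteq> 0"
  shows "integral {a..b} (\<lambda>s. cis (-(t * s))) = (iexp (-(t * a)) - iexp (-(t * b))) / (\<i> * complex_of_real t)"
proof -
  have "((\<lambda>s. cis (-(t * s))) has_integral
          (\<i> * cis (-(t * b)) / complex_of_real t - \<i> * cis (-(t * a)) / complex_of_real t)) {a..b}"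
    by (rule fundamental_theorem_of_calculus) (use assms cis_deriv in auto)
  then have "integral {a..b} (\<lambda>s. cis (-(t * s))) = \<i> * cis (-(t * b)) / complex_of_real t - \<i> * cis (-(t * a)) / complex_of_real t"
    by (rule integral_unique)
  also have "\<dots> = (iexp (-(t * a)) - iexp (-(t * b))) / (\<i> * complex_of_real t)"
    using assms by (simp add: cis_conv_exp field_simps)
  finally show ?thesis .
qed

lemma cont_cis2: "continuous_on S (\<lambda>(w, s). cis (-(w * s)))"
  unfolding cis_conv_exp case_prod_unfold by (intro continuous_intros)



lemma inv_interval:
  assumes pd: "prob_density f" and cf: "continuous_on UNIV f"
    and z: "\<And>w. pi \<le> \<bar>w\<bar> \<Longrightarrow> char_fun f w = 0" and ab: "a \<le> b"
  shows "integral {a..b} (\<lambda>t. (1/(2*pi)) * integral {-pi..pi} (\<lambda>w. char_fun f w * cis (-(w * t))))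
         = complex_of_real (integral {a..b} f)"
proof -
  define M where "M = density lborel (\<lambda>t. ennreal (f t))"
  define \<Phi> where "\<Phi> = char_fun f"
  have RD: "real_distribution M" unfolding M_def by (rule dens_real_dist[OF pd])
  have chM: "char M = \<Phi>" unfolding M_def \<Phi>_def using dens_char[OF pd] by (intro ext)
  have \<Phi>c: "continuous_on UNIV \<Phi>" unfolding \<Phi>_def by (rule char_cont[OF pd])
  have \<Phi>c' [continuous_intros]: "continuous_on S h \<Longrightarrow> continuous_on S (\<lambda>x. \<Phi> (h x))" for S and h :: "'z::topological_space \<Rightarrow> real"
    using continuous_on_compose2[OF \<Phi>c] by auto
  define G where "G w = integral {a..b} (\<lambda>s. cis (-(w * s)))" for w
  define H where "H w = \<Phi> w * G w" for w
  have "continuous_on UNIV (\<lambda>w. integral (cbox a b) (\<lambda>s. cis (-(w * s))))"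
    by (rule integral_continuous_on_param) (rule cont_cis2)
  then have Gc: "continuous_on UNIV G" unfolding G_def by simp
  have Hc: "continuous_on UNIV H" unfolding H_def[abs_def]
    by (intro continuous_intros Gc continuous_on_id)
  have Hz: "\<And>w. pi \<le> \<bar>w\<bar> \<Longrightarrow> H w = 0" using z by (simp add: H_def \<Phi>_def)
  define Lev where "Lev t = (iexp (-(t * a)) - iexp (-(t * b))) / (\<i> * complex_of_real t) * char M t" for t
  have LevH: "Lev t = H t" if "t \<noteq> 0" for t
    using cis_int[OF ab that] by (simp add: Lev_def H_def G_def chM mult.commute)
  have [measurable]: "char M \<in> borel_measurable borel"
    using real_distribution.char_measurable[OF RD] .
  have Lm: "Lev \<in> borel_measurable borel" unfolding Lev_def[abs_def] by measurable
  have Hm: "H \<in> borel_measurable borel" by (rule borel_measurable_continuous_onI[OF Hc])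
  have step2: "interval_lebesgue_integral lborel (ereal (real_of_int (- int n))) (ereal (real n)) Lev
       = integral {-pi..pi} H" if n: "n \<ge> 4" for n :: nat
  proof -
    have "interval_lebesgue_integral lborel (ereal (real_of_int (- int n))) (ereal (real n)) Lev
        = interval_lebesgue_integral lborel (ereal (- real n)) (ereal (real n)) H"
    proof -
      have "interval_lebesgue_integral lborel (ereal (- real n)) (ereal (real n)) Lev
          = interval_lebesgue_integral lborel (ereal (- real n)) (ereal (real n)) H"
        by (rule interval_integral_cong_AE[OF Lm Hm])
           (use AE_lborel_singleton[of "0::real"] in \<open>auto elim!: eventually_mono simp: LevH\<close>)
      then show ?thesis by simp
    qed
    also have "\<dots> = integral {- real n..real n} H"
      by (rule interval_integral_eq_integral)
         (auto intro!: borel_integrable_atLeastAtMost' continuous_on_subset[OF Hc])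
    also have "\<dots> = integral {- real n..real n} (\<lambda>x. if x \<in> {-pi..pi} then H x else 0)"
      by (rule integral_cong) (auto simp: Hz)
    also have "\<dots> = integral ({-pi..pi} \<inter> {- real n..real n}) H"
      by (rule integral_restrict_Int)
    also have "{-pi..pi} \<inter> {- real n..real n} = {-pi..pi}"
      using pi_less_4 n by auto
    finally show ?thesis .
  qed
  have lim: "(\<lambda>n::nat. complex_of_real (1 / (2 * pi)) *
        interval_lebesgue_integral lborel (ereal (real_of_int (- int n))) (ereal (real n)) Lev)
      \<longlonglongrightarrow> complex_of_real (measure M {a<..b})"
    using real_distribution.Levy_Inversion[OF RD ab] dens_single[OF pd] unfolding Lev_def M_def
    by simp
  have "eventually (\<lambda>n::nat. complex_of_real (1 / (2 * pi)) *
        interval_lebesgue_integral lborel (ereal (real_of_int (- int n))) (ereal (real n)) Lev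
      = complex_of_real (1 / (2 * pi)) * integral {-pi..pi} H) sequentially"
    using eventually_ge_at_top[of "4::nat"] by eventually_elim (subst step2, auto)
  from Lim_transform_eventually[OF lim this]
  have meas: "complex_of_real (1 / (2 * pi)) * integral {-pi..pi} H = complex_of_real (measure M {a<..b})"
    by (simp add: LIMSEQ_const_iff)
  have swap: "integral {a..b} (\<lambda>t. integral {-pi..pi} (\<lambda>w. \<Phi> w * cis (-(w * t))))
      = integral {-pi..pi} (\<lambda>w. integral {a..b} (\<lambda>t. \<Phi> w * cis (-(w * t))))"
  proof -
    have "continuous_on (cbox (a, -pi) (b, pi)) (\<lambda>(t, w). \<Phi> w * cis (-(w * t)))"
      unfolding cis_conv_exp case_prod_unfold by (intro continuous_intros)
    from integral_swap_continuous[OF this] show ?thesis by simp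
  qed
  have "integral {a..b} (\<lambda>t. (1/(2*pi)) * integral {-pi..pi} (\<lambda>w. \<Phi> w * cis (-(w * t))))
      = (1/(2*pi)) * integral {-pi..pi} H"
    unfolding integral_mult_right swap by (simp add: H_def[abs_def] G_def[abs_def])
  also have "\<dots> = complex_of_real (integral {a..b} f)"
    using meas dens_measure[OF pd cf ab] unfolding M_def by simp
  finally show ?thesis unfolding \<Phi>_def .
qed



lemma inv_point:
  assumes pd: "prob_density f" and cf: "continuous_on UNIV f"
    and z: "\<And>w. pi \<le> \<bar>w\<bar> \<Longrightarrow> char_fun f w = 0"
  shows "complex_of_real (f x) = (1/(2*pi)) * integral {-pi..pi} (\<lambda>w. char_fun f w * cis (-(w * x)))"
proof -
  define \<Phi> where "\<Phi> = char_fun f"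
  have \<Phi>c: "continuous_on UNIV \<Phi>" unfolding \<Phi>_def by (rule char_cont[OF pd])
  have \<Phi>c' [continuous_intros]: "continuous_on S h \<Longrightarrow> continuous_on S (\<lambda>x. \<Phi> (h x))" for S and h :: "'z::topological_space \<Rightarrow> real"
    using continuous_on_compose2[OF \<Phi>c] by auto
  define g where "g t = (1/(2*pi)) * integral {-pi..pi} (\<lambda>w. \<Phi> w * cis (-(w * t)))" for t
  have "continuous_on UNIV (\<lambda>t. integral (cbox (-pi) pi) (\<lambda>w. \<Phi> w * cis (-(w * t))))"
    by (rule integral_continuous_on_param)
       (unfold cis_conv_exp case_prod_unfold, intro continuous_intros)
  then have gc: "continuous_on UNIV g" unfolding g_def[abs_def]
    by (intro continuous_intros) simp
  define a where "a = x - 1"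
  define b where "b = x + 1"
  have fc': "continuous_on UNIV (\<lambda>t. complex_of_real (f t))"
    by (intro continuous_intros cf)
  have eq: "integral {a..u} g = integral {a..u} (\<lambda>t. complex_of_real (f t))" if "u \<in> {a..b}" for u
  proof -
    have "integral {a..u} g = complex_of_real (integral {a..u} f)"
      using inv_interval[OF pd cf z, of a u] that unfolding g_def \<Phi>_def by simp
    also have "\<dots> = integral {a..u} (\<lambda>t. complex_of_real (f t))"
    proof -
      have "(f has_integral integral {a..u} f) {a..u}"
        by (intro integrable_integral integrable_continuous_interval continuous_on_subset[OF cf]) auto
      then show ?thesis
        by (intro sym[OF integral_unique] has_integral_of_real)
    qed
    finally show ?thesis .
  qed
  have xin: "x \<in> {a..b}" by (simp add: a_def b_def)
  have d1: "((\<lambda>u. integral {a..u} g) has_vector_derivative g x) (at x within {a..b})"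
    by (rule integral_has_vector_derivative[OF continuous_on_subset[OF gc] xin]) auto
  have d2: "((\<lambda>u. integral {a..u} (\<lambda>t. complex_of_real (f t))) has_vector_derivative complex_of_real (f x)) (at x within {a..b})"
    by (rule integral_has_vector_derivative[OF continuous_on_subset[OF fc'] xin]) auto
  have d1': "((\<lambda>u. integral {a..u} (\<lambda>t. complex_of_real (f t))) has_vector_derivative g x) (at x within {a..b})"
    by (rule has_vector_derivative_transform[OF xin _ d1]) (simp add: eq)
  have "at x within {a..b} = at x" by (rule at_within_Icc_at) (auto simp: a_def b_def)
  then have nb: "at x within {a..b} \<noteq> bot" by simp
  have "g x = complex_of_real (f x)" by (rule vector_derivative_unique_within[OF nb d1' d2])
  then show ?thesis by (simp add: g_def \<Phi>_def)
qed



definition T :: "(real \<Rightarrow> real) \<Rightarrow> nat \<Rightarrow> real \<Rightarrow> complex" where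
  "T f N x = (\<Sum>n\<le>N. \<Sum>k\<in>{- int n..int n}. complex_of_real (f (of_int k)) * cis (x * of_int k))"

lemma T_repr:
  assumes pd: "prob_density f" and cf: "continuous_on UNIV f"
    and z: "\<And>w. pi \<le> \<bar>w\<bar> \<Longrightarrow> char_fun f w = 0"
  shows "T f N x = (1/(2*pi)) * integral {-pi..pi} (\<lambda>w. char_fun f w * complex_of_real (D N (x - w)))"
proof -
  define \<Phi> where "\<Phi> = char_fun f"
  have \<Phi>c: "continuous_on UNIV \<Phi>" unfolding \<Phi>_def by (rule char_cont[OF pd])
  have \<Phi>c' [continuous_intros]: "continuous_on S h \<Longrightarrow> continuous_on S (\<lambda>x. \<Phi> (h x))" for S and h :: "'z::topological_space \<Rightarrow> real"
    using continuous_on_compose2[OF \<Phi>c] by auto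
  have int: "(\<lambda>w. \<Phi> w * cis ((x - w) * of_int k)) integrable_on {-pi..pi}" for k :: int
    by (rule integrable_continuous_interval) (unfold cis_conv_exp, intro continuous_intros)
  have tm: "complex_of_real (f (of_int k)) * cis (x * of_int k)
      = (1/(2*pi)) * integral {-pi..pi} (\<lambda>w. \<Phi> w * cis ((x - w) * of_int k))" for k :: int
  proof -
    have "complex_of_real (f (of_int k)) * cis (x * of_int k)
       = (1/(2*pi)) * integral {-pi..pi} (\<lambda>w. \<Phi> w * cis (-(w * of_int k))) * cis (x * of_int k)"
      using inv_point[OF pd cf z, of "of_int k"] unfolding \<Phi>_def by simp
    also have "\<dots> = (1/(2*pi)) * integral {-pi..pi} (\<lambda>w. \<Phi> w * cis (-(w * of_int k)) * cis (x * of_int k))"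
      by simp
    also have "(\<lambda>w. \<Phi> w * cis (-(w * of_int k)) * cis (x * of_int k)) = (\<lambda>w. \<Phi> w * cis ((x - w) * of_int k))"
      by (intro ext) (simp add: mult.assoc cis_mult algebra_simps)
    finally show ?thesis .
  qed
  have "T f N x = (\<Sum>n\<le>N. \<Sum>k\<in>{- int n..int n}. (1/(2*pi)) * integral {-pi..pi} (\<lambda>w. \<Phi> w * cis ((x - w) * of_int k)))"
    unfolding T_def tm ..
  also have "\<dots> = (1/(2*pi)) * (\<Sum>n\<le>N. \<Sum>k\<in>{- int n..int n}. integral {-pi..pi} (\<lambda>w. \<Phi> w * cis ((x - w) * of_int k)))"
    by (simp only: sum_distrib_left)
  also have "(\<Sum>n\<le>N. \<Sum>k\<in>{- int n..int n}. integral {-pi..pi} (\<lambda>w. \<Phi> w * cis ((x - w) * of_int k)))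
     = integral {-pi..pi} (\<lambda>w. \<Sum>n\<le>N. \<Sum>k\<in>{- int n..int n}. \<Phi> w * cis ((x - w) * of_int k))"
  proof -
    have "integral {-pi..pi} (\<lambda>w. \<Sum>n\<le>N. \<Sum>k\<in>{- int n..int n}. \<Phi> w * cis ((x - w) * of_int k))
      = (\<Sum>n\<le>N. integral {-pi..pi} (\<lambda>w. \<Sum>k\<in>{- int n..int n}. \<Phi> w * cis ((x - w) * of_int k)))"
      by (rule integral_sum) (auto intro!: integrable_sum int)
    also have "\<dots> = (\<Sum>n\<le>N. \<Sum>k\<in>{- int n..int n}. integral {-pi..pi} (\<lambda>w. \<Phi> w * cis ((x - w) * of_int k)))"
      by (intro sum.cong refl integral_sum) (auto intro!: int)
    finally show ?thesis by simp
  qed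
  also have "(\<lambda>w. \<Sum>n\<le>N. \<Sum>k\<in>{- int n..int n}. \<Phi> w * cis ((x - w) * of_int k)) = (\<lambda>w. \<Phi> w * complex_of_real (D N (x - w)))"
  proof (intro ext)
    fix w
    have "(\<Sum>n\<le>N. \<Sum>k\<in>{- int n..int n}. \<Phi> w * cis ((x - w) * of_int k))
       = \<Phi> w * (\<Sum>n\<le>N. \<Sum>k\<in>{- int n..int n}. cis ((x - w) * of_int k))"
      by (simp only: sum_distrib_left)
    also have "\<dots> = \<Phi> w * complex_of_real (D N (x - w))"
      by (simp only: E_cis D_def of_real_sum)
    finally show "(\<Sum>n\<le>N. \<Sum>k\<in>{- int n..int n}. \<Phi> w * cis ((x - w) * of_int k)) = \<Phi> w * complex_of_real (D N (x - w))" .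
  qed
  finally show ?thesis unfolding \<Phi>_def .
qed



lemma lim_from_bound:
  fixes X :: "nat \<Rightarrow> complex"
  assumes "\<And>e. e > 0 \<Longrightarrow> \<exists>C. \<forall>N. norm (X N - L) \<le> e + C / real (Suc N)"
  shows "X \<longlonglongrightarrow> L"
proof (rule LIMSEQ_I)
  fix r :: real assume r: "0 < r"
  obtain C where C: "\<forall>N. norm (X N - L) \<le> r/2 + C / real (Suc N)" using assms[of "r/2"] r by auto
  obtain n where n: "\<bar>C\<bar> / (r/2) < real n" using reals_Archimedean2 by blast
  show "\<exists>no. \<forall>N\<ge>no. norm (X N - L) < r"
  proof (intro exI allI impI)
    fix N assume "n \<le> N"
    then have "\<bar>C\<bar> / (r/2) < real (Suc N)" using n by simp
    then have "\<bar>C\<bar> < r/2 * real (Suc N)" using r by (simp add: field_simps)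
    then have "C / real (Suc N) < r/2" by (simp add: field_simps)
    then show "norm (X N - L) < r" using C[rule_format, of N] by linarith
  qed
qed

lemma char_facts:
  assumes pd: "prob_density f"
  shows "char_fun f 0 = 1" "norm (char_fun f w) \<le> 1"
proof -
  have RD: "real_distribution (density lborel (\<lambda>t. ennreal (f t)))" by (rule dens_real_dist[OF pd])
  show "char_fun f 0 = 1" using real_distribution.char_zero[OF RD] dens_char[OF pd] by simp
  show "norm (char_fun f w) \<le> 1" using real_distribution.cmod_char_le_1[OF RD] dens_char[OF pd] by simp
qed

lemma D_int_c: "((\<lambda>w. complex_of_real (D N w)) has_integral complex_of_real (real (Suc N) * (2 * pi))) {-pi..pi}"
  by (rule has_integral_of_real[OF D_integral])

lemma T0_lim:
  assumes pd: "prob_density f" and cf: "continuous_on UNIV f"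
    and z: "\<And>w. pi \<le> \<bar>w\<bar> \<Longrightarrow> char_fun f w = 0"
  shows "(\<lambda>N. T f N 0 / complex_of_real (real (Suc N))) \<longlonglongrightarrow> 1"
proof (rule lim_from_bound)
  fix e :: real assume e: "e > 0"
  define \<Phi> where "\<Phi> = char_fun f"
  have \<Phi>c: "continuous_on UNIV \<Phi>" unfolding \<Phi>_def by (rule char_cont[OF pd])
  have \<Phi>c' [continuous_intros]: "continuous_on S h \<Longrightarrow> continuous_on S (\<lambda>x. \<Phi> (h x))" for S and h :: "'z::topological_space \<Rightarrow> real"
    using continuous_on_compose2[OF \<Phi>c] by auto
  have \<Phi>0: "\<Phi> 0 = 1" and \<Phi>1: "\<And>w. norm (\<Phi> w) \<le> 1" using char_facts[OF pd] unfolding \<Phi>_def by auto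
  have "isCont \<Phi> 0" using \<Phi>c by (simp add: continuous_on_eq_continuous_at)
  then obtain \<eta> where \<eta>: "\<eta> > 0" "\<And>w. dist w 0 < \<eta> \<Longrightarrow> dist (\<Phi> w) (\<Phi> 0) < e"
    unfolding continuous_at_eps_delta using e by blast
  define d where "d = min \<eta> pi"
  have d: "0 < d" "d \<le> pi" "d \<le> \<eta>" using \<eta> pi_gt_zero by (auto simp: d_def)
  have cd: "cos d < 1" using cos_lt_1[of d] d by auto
  define C where "C = 4 / (1 - cos d)"
  have C0: "C \<ge> 0" using cd by (simp add: C_def)
  show "\<exists>C. \<forall>N. norm (T f N 0 / complex_of_real (real (Suc N)) - 1) \<le> e + C / real (Suc N)"
  proof (intro exI allI)
    fix N
    define S where "S = real (Suc N)"
    have S0: "S > 0" by (simp add: S_def)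
    have Tr: "T f N 0 = (1/(2*pi)) * integral {-pi..pi} (\<lambda>w. \<Phi> w * complex_of_real (D N w))"
      using T_repr[OF pd cf z, of N 0] by (simp add: D_even \<Phi>_def)
    have i1: "(\<lambda>w. \<Phi> w * complex_of_real (D N w)) integrable_on {-pi..pi}"
      by (rule integrable_continuous_interval) (intro continuous_intros continuous_D)
    have i2: "(\<lambda>w. complex_of_real (D N w)) integrable_on {-pi..pi}"
      using D_int_c by blast
    have I: "integral {-pi..pi} (\<lambda>w. (\<Phi> w - 1) * complex_of_real (D N w))
        = integral {-pi..pi} (\<lambda>w. \<Phi> w * complex_of_real (D N w)) - complex_of_real (S * (2 * pi))"
    proof -
      have "integral {-pi..pi} (\<lambda>w. (\<Phi> w - 1) * complex_of_real (D N w))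
          = integral {-pi..pi} (\<lambda>w. \<Phi> w * complex_of_real (D N w) - complex_of_real (D N w))"
        by (simp add: algebra_simps)
      also have "\<dots> = integral {-pi..pi} (\<lambda>w. \<Phi> w * complex_of_real (D N w)) - integral {-pi..pi} (\<lambda>w. complex_of_real (D N w))"
        by (rule integral_diff[OF i1 i2])
      also have "integral {-pi..pi} (\<lambda>w. complex_of_real (D N w)) = complex_of_real (S * (2 * pi))"
        using D_int_c by (simp add: S_def integral_unique)
      finally show ?thesis .
    qed
    have eqn: "T f N 0 / complex_of_real S - 1
        = complex_of_real (1 / (2 * pi * S)) * integral {-pi..pi} (\<lambda>w. (\<Phi> w - 1) * complex_of_real (D N w))"
      unfolding I Tr using S0 by (simp add: field_simps)
    have i3: "(\<lambda>w. (\<Phi> w - 1) * complex_of_real (D N w)) integrable_on {-pi..pi}"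
      by (rule integrable_continuous_interval) (intro continuous_intros continuous_D)
    have i4: "((\<lambda>w. e * D N w + C) has_integral (e * (S * (2 * pi)) + C * (2 * pi))) {-pi..pi}"
    proof -
      have "((\<lambda>w. C) has_integral C * (2 * pi)) {-pi..pi}"
        using has_integral_const_real[of C "-pi" pi] by (simp add: mult.commute)
      moreover have "(D N has_integral S * (2 * pi)) {-pi..pi}" unfolding S_def by (rule D_integral)
      ultimately show ?thesis
        by (intro has_integral_add has_integral_mult_right)
    qed
    have pw: "norm ((\<Phi> w - 1) * complex_of_real (D N w)) \<le> e * D N w + C" if w: "w \<in> {-pi..pi}" for w
    proof -
      have Dn: "D N w \<ge> 0" using w by (intro D_nonneg) auto
      have "norm ((\<Phi> w - 1) * complex_of_real (D N w)) = norm (\<Phi> w - 1) * D N w"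
        using Dn by (simp add: norm_mult)
      also have "\<dots> \<le> e * D N w + C"
      proof (cases "\<bar>w\<bar> < d")
        case True
        then have "norm (\<Phi> w - 1) < e" using \<eta>(2)[of w] d \<Phi>0 by (auto simp: dist_norm)
        then have "norm (\<Phi> w - 1) * D N w \<le> e * D N w" using Dn by (intro mult_right_mono) auto
        then show ?thesis using C0 by linarith
      next
        case False
        have Db: "D N w \<le> 2 / (1 - cos d)"
          by (rule D_bound) (use False d w in auto)
        have n2: "norm (\<Phi> w - 1) \<le> 2" using norm_triangle_ineq4[of "\<Phi> w" 1] \<Phi>1[of w] by simp
        have "norm (\<Phi> w - 1) * D N w \<le> 2 * (2 / (1 - cos d))"
          using Db n2 Dn by (intro mult_mono) auto
        also have "\<dots> = C" by (simp add: C_def)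
        finally have "norm (\<Phi> w - 1) * D N w \<le> C" .
        then show ?thesis using mult_nonneg_nonneg[of e "D N w"] e Dn by linarith
      qed
      finally show ?thesis .
    qed
    have nb: "norm (integral {-pi..pi} (\<lambda>w. (\<Phi> w - 1) * complex_of_real (D N w))) \<le> e * (S * (2 * pi)) + C * (2 * pi)"
    proof -
      have "norm (integral {-pi..pi} (\<lambda>w. (\<Phi> w - 1) * complex_of_real (D N w))) \<le> integral {-pi..pi} (\<lambda>w. e * D N w + C)"
        by (rule integral_norm_bound_integral[OF i3 _ pw]) (use i4 in blast)
      then show ?thesis using integral_unique[OF i4] by simp
    qed
    have "norm (T f N 0 / complex_of_real S - 1) = (1 / (2 * pi * S)) * norm (integral {-pi..pi} (\<lambda>w. (\<Phi> w - 1) * complex_of_real (D N w)))"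
      unfolding eqn norm_mult norm_of_real using S0 by simp
    also have "\<dots> \<le> (1 / (2 * pi * S)) * (e * (S * (2 * pi)) + C * (2 * pi))"
      using nb S0 by (intro mult_left_mono) auto
    also have "\<dots> = e + C / S" using S0 by (simp add: field_simps)
    finally show "norm (T f N 0 / complex_of_real (real (Suc N)) - 1) \<le> e + C / real (Suc N)"
      by (simp add: S_def)
  qed
qed



lemma Tx_lim:
  assumes pd: "prob_density f" and cf: "continuous_on UNIV f"
    and zD: "\<And>w. \<Delta> \<le> \<bar>w\<bar> \<Longrightarrow> char_fun f w = 0"
    and D0: "0 < \<Delta>" "\<Delta> \<le> pi" and x: "\<Delta> < \<bar>x\<bar>" "\<bar>x\<bar> \<le> pi"
  shows "(\<lambda>N. T f N x / complex_of_real (real (Suc N))) \<longlonglongrightarrow> 0"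
proof (rule lim_from_bound)
  fix e :: real assume e: "e > 0"
  have z: "\<And>w. pi \<le> \<bar>w\<bar> \<Longrightarrow> char_fun f w = 0" using zD D0 by auto
  define \<Phi> where "\<Phi> = char_fun f"
  have \<Phi>c: "continuous_on UNIV \<Phi>" unfolding \<Phi>_def by (rule char_cont[OF pd])
  have \<Phi>c' [continuous_intros]: "continuous_on S h \<Longrightarrow> continuous_on S (\<lambda>x. \<Phi> (h x))" for S and h :: "'z::topological_space \<Rightarrow> real"
    using continuous_on_compose2[OF \<Phi>c] by auto
  have \<Phi>1: "\<And>w. norm (\<Phi> w) \<le> 1" using char_facts[OF pd] unfolding \<Phi>_def by auto
  define \<delta> where "\<delta> = \<bar>x\<bar> - \<Delta>"
  have \<delta>: "0 < \<delta>" "\<delta> \<le> pi" using x D0 by (auto simp: \<delta>_def)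
  have cd: "cos \<delta> < 1" using cos_lt_1[of \<delta>] \<delta> by auto
  define C where "C = 2 / (1 - cos \<delta>)"
  have C0: "C \<ge> 0" using cd by (simp add: C_def)
  show "\<exists>C. \<forall>N. norm (T f N x / complex_of_real (real (Suc N)) - 0) \<le> e + C / real (Suc N)"
  proof (intro exI allI)
    fix N
    define S where "S = real (Suc N)"
    have S0: "S > 0" by (simp add: S_def)
    have Tr: "T f N x = (1/(2*pi)) * integral {-pi..pi} (\<lambda>w. \<Phi> w * complex_of_real (D N (x - w)))"
      using T_repr[OF pd cf z, of N x] by (simp add: \<Phi>_def)
    have i1: "(\<lambda>w. \<Phi> w * complex_of_real (D N (x - w))) integrable_on {-pi..pi}"
      by (rule integrable_continuous_interval)
         (intro continuous_intros continuous_on_compose2[OF continuous_D[of UNIV N]], auto)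
    have i4: "((\<lambda>w. C) has_integral C * (2 * pi)) {-pi..pi}"
      using has_integral_const_real[of C "-pi" pi] by (simp add: mult.commute)
    have pw: "norm (\<Phi> w * complex_of_real (D N (x - w))) \<le> C" if w: "w \<in> {-pi..pi}" for w
    proof (cases "\<Delta> \<le> \<bar>w\<bar>")
      case True then show ?thesis using zD C0 by (simp add: \<Phi>_def)
    next
      case False
      have u1: "\<delta> \<le> \<bar>x - w\<bar>" using False by (simp add: \<delta>_def)
      have u2: "\<bar>x - w\<bar> \<le> 2 * pi - \<delta>" using False x by (simp add: \<delta>_def)
      have cu: "cos (x - w) < 1" using cos_le_delta[OF \<delta>(1) u1 u2] cd by simp
      have Dn: "D N (x - w) \<ge> 0" by (rule D_nonneg_gen[OF cu])
      have Db: "D N (x - w) \<le> C" unfolding C_def by (rule D_bound[OF \<delta>(1) u1 u2])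
      have "norm (\<Phi> w * complex_of_real (D N (x - w))) = norm (\<Phi> w) * D N (x - w)"
        using Dn by (simp add: norm_mult)
      also have "\<dots> \<le> 1 * C" using \<Phi>1[of w] Db Dn by (intro mult_mono) auto
      finally show ?thesis by simp
    qed
    have nb: "norm (integral {-pi..pi} (\<lambda>w. \<Phi> w * complex_of_real (D N (x - w)))) \<le> C * (2 * pi)"
    proof -
      have "norm (integral {-pi..pi} (\<lambda>w. \<Phi> w * complex_of_real (D N (x - w)))) \<le> integral {-pi..pi} (\<lambda>w. C)"
        by (rule integral_norm_bound_integral[OF i1 _ pw]) (use i4 in blast)
      then show ?thesis using integral_unique[OF i4] by (simp add: mult.commute)
    qed
    have "norm (T f N x / complex_of_real S - 0) = (1 / (2 * pi * S)) * norm (integral {-pi..pi} (\<lambda>w. \<Phi> w * complex_of_real (D N (x - w))))"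
    proof -
      have eq2: "T f N x / complex_of_real S = complex_of_real (1 / (2 * pi * S)) * integral {-pi..pi} (\<lambda>w. \<Phi> w * complex_of_real (D N (x - w)))"
        unfolding Tr using S0 by (simp add: field_simps)
      show ?thesis unfolding diff_zero eq2 norm_mult norm_of_real using S0 by simp
    qed
    also have "\<dots> \<le> (1 / (2 * pi * S)) * (C * (2 * pi))"
      using nb S0 by (intro mult_left_mono) auto
    also have "\<dots> = C / S" using S0 by (simp add: field_simps)
    also have "\<dots> \<le> e + C / S" using e by simp
    finally show "norm (T f N x / complex_of_real (real (Suc N)) - 0) \<le> e + C / real (Suc N)"
      by (simp add: S_def)
  qed
qed



lemma finite_int_bound: "finite (F :: int set) \<Longrightarrow> \<exists>M::nat. F \<subseteq> {- int M..int M}"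
proof -
  assume fin: "finite F"
  define M where "M = nat (Max (insert 0 (abs ` F)))"
  have "\<bar>k\<bar> \<le> int M" if "k \<in> F" for k
  proof -
    have "\<bar>k\<bar> \<le> Max (insert 0 (abs ` F))" using fin that by (intro Max_ge) auto
    then show ?thesis unfolding M_def by linarith
  qed
  then show ?thesis by (intro exI[of _ M]) fastforce
qed

lemma filterlim_sym_intervals:
  "filterlim (\<lambda>n::nat. {- int n..int n}) (finite_subsets_at_top UNIV) sequentially"
  unfolding filterlim_finite_subsets_at_top
proof (intro allI impI)
  fix X :: "int set" assume "finite X \<and> X \<subseteq> UNIV"
  then obtain M where M: "X \<subseteq> {- int M..int M}" using finite_int_bound by blast
  show "eventually (\<lambda>n. finite {- int n..int n} \<and> X \<subseteq> {- int n..int n} \<and> {- int n..int n} \<subseteq> UNIV) sequentially"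
    using eventually_ge_at_top[of M] by eventually_elim (use M in auto)
qed

lemma has_sum_sym_lim:
  assumes "(g has_sum S) (UNIV :: int set)"
  shows "(\<lambda>n::nat. \<Sum>k\<in>{- int n..int n}. g k) \<longlonglongrightarrow> S"
  using filterlim_compose[OF assms[unfolded has_sum_def] filterlim_sym_intervals] by simp



theorem lemma4:
  fixes f :: "real \<Rightarrow> real" and \<Delta> :: real
  assumes "0 < \<Delta>" and "\<Delta> \<le> pi"
    and "prob_density f"
    and "continuous_on UNIV f"
    and "closure {\<omega>. char_fun f \<omega> \<noteq> 0} \<subseteq> {-\<Delta><..<\<Delta>}"
  shows "(\<forall>k::int. 0 \<le> f (of_int k))
       \<and> ((\<lambda>k::int. f (of_int k)) has_sum 1) UNIV
       \<and> (\<forall>\<omega>. \<Delta> < \<bar>\<omega>\<bar> \<and> \<bar>\<omega>\<bar> \<le> pi \<longrightarrow> char_fun_int (\<lambda>k. f (of_int k)) \<omega> = 0)"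
proof -
  note D0 = assms(1,2) and pd = assms(3) and cf = assms(4) and cl = assms(5)
  have zD: "char_fun f w = 0" if w: "\<Delta> \<le> \<bar>w\<bar>" for w
  proof (rule ccontr)
    assume ne: "char_fun f w \<noteq> 0"
    have "w \<in> {\<omega>. char_fun f \<omega> \<noteq> 0}" using ne by simp
    then have "w \<in> closure {\<omega>. char_fun f \<omega> \<noteq> 0}" by (rule closure_subset[THEN subsetD])
    then have "w \<in> {-\<Delta><..<\<Delta>}" by (rule cl[THEN subsetD])
    then have "\<bar>w\<bar> < \<Delta>" by (simp add: abs_less_iff)
    then show False using w by linarith
  qed
  have z: "char_fun f w = 0" if "pi \<le> \<bar>w\<bar>" for w
    using D0(2) that by (intro zD) linarith
  define a where "a k = f (of_int k)" for k :: int
  have a0: "\<And>k. a k \<ge> 0" using pd by (simp add: a_def prob_density_def)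
  define P where "P n = (\<Sum>k\<in>{- int n..int n}. a k)" for n :: nat
  define \<sigma> where "\<sigma> N = (\<Sum>n\<le>N. P n) / real (Suc N)" for N
  have Pmono: "P m \<le> P n" if "m \<le> n" for m n
    unfolding P_def using that a0 by (intro sum_mono2) auto
  have P0: "P n \<ge> 0" for n unfolding P_def using a0 by (intro sum_nonneg) auto
  have T0: "T f N 0 = complex_of_real (\<Sum>n\<le>N. P n)" for N
    by (simp add: T_def P_def a_def)
  have "(\<lambda>N. Re (T f N 0 / complex_of_real (real (Suc N)))) \<longlonglongrightarrow> Re 1"
    by (intro tendsto_Re T0_lim[OF pd cf z])
  then have \<sigma>lim: "\<sigma> \<longlonglongrightarrow> 1"
    unfolding T0 \<sigma>_def by (simp add: Re_divide_of_real)
  have \<sigma>P: "\<sigma> N \<le> P N" for N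
  proof -
    have "(\<Sum>n\<le>N. P n) \<le> (\<Sum>n\<le>N. P N)" by (intro sum_mono Pmono) auto
    then show ?thesis by (simp add: \<sigma>_def field_simps)
  qed
  have P1: "P M \<le> 1" for M
  proof -
    have lb: "P M - real M * P M * inverse (real (Suc N)) \<le> \<sigma> N" if "M \<le> N" for N
    proof -
      have "(\<Sum>n\<le>N. (if M \<le> n then P M else 0)) \<le> (\<Sum>n\<le>N. P n)"
        by (intro sum_mono) (auto simp: Pmono P0)
      moreover have "(\<Sum>n\<le>N. (if M \<le> n then P M else 0)) = real (Suc N - M) * P M"
      proof -
        have "(\<Sum>n\<le>N. (if M \<le> n then P M else 0)) = (\<Sum>n\<in>{M..N}. P M)"
          by (rule sum.mono_neutral_cong_right) auto
        then show ?thesis by simp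
      qed
      ultimately have "real (Suc N - M) * P M \<le> (\<Sum>n\<le>N. P n)" by simp
      moreover have "real (Suc N - M) = real (Suc N) - real M" using that by simp
      ultimately have "(real (Suc N) - real M) * P M \<le> (\<Sum>n\<le>N. P n)" by simp
      then have "(real (Suc N) - real M) * P M / real (Suc N) \<le> (\<Sum>n\<le>N. P n) / real (Suc N)"
        by (rule divide_right_mono) simp
      moreover have "(real (Suc N) - real M) * P M / real (Suc N) = P M - real M * P M * inverse (real (Suc N))"
        by (simp add: field_simps)
      ultimately show ?thesis by (simp add: \<sigma>_def)
    qed
    have "(\<lambda>N. P M - real M * P M * inverse (real (Suc N))) \<longlonglongrightarrow> P M - real M * P M * 0"
      by (intro tendsto_intros LIMSEQ_inverse_real_of_nat)
    then have l2: "(\<lambda>N. P M - real M * P M * inverse (real (Suc N))) \<longlonglongrightarrow> P M" by simp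
    show ?thesis by (rule LIMSEQ_le[OF l2 \<sigma>lim]) (use lb in auto)
  qed
  have Plim: "P \<longlonglongrightarrow> 1"
    by (rule tendsto_sandwich[OF _ _ \<sigma>lim tendsto_const]) (auto simp: \<sigma>P P1)
  have asum: "a summable_on UNIV"
  proof (rule nonneg_bdd_above_summable_on)
    show "bdd_above (sum a ` {F. F \<subseteq> UNIV \<and> finite F})"
    proof (rule bdd_aboveI2)
      fix F :: "int set" assume "F \<in> {F. F \<subseteq> UNIV \<and> finite F}"
      then obtain M where M: "F \<subseteq> {- int M..int M}" and fin: "finite F" using finite_int_bound by blast
      have "sum a F \<le> P M" unfolding P_def using M a0 by (intro sum_mono2) auto
      then show "sum a F \<le> 1" using P1[of M] by simp
    qed
  qed (use a0 in auto)
  have "P \<longlonglongrightarrow> infsum a UNIV" unfolding P_def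
    by (rule has_sum_sym_lim) (use asum in \<open>simp add: summable_iff_has_sum_infsum[symmetric]\<close>)
  then have inf1: "infsum a UNIV = 1" using Plim LIMSEQ_unique by blast
  have hs: "(a has_sum 1) UNIV" using asum inf1 by (metis summable_iff_has_sum_infsum)
  have xcase: "char_fun_int (\<lambda>k. f (of_int k)) x = 0" if x: "\<Delta> < \<bar>x\<bar>" "\<bar>x\<bar> \<le> pi" for x
  proof -
    define b where "b k = complex_of_real (a k) * cis (x * of_int k)" for k :: int
    have nb: "norm (b k) = a k" for k using a0[of k] by (simp add: b_def norm_mult)
    have "(\<lambda>k. norm (a k)) summable_on UNIV" using asum summable_on_iff_abs_summable_on_real by blast
    then have "(\<lambda>k. norm (b k)) summable_on UNIV"
      by (rule Infinite_Sum.abs_summable_on_comparison_test) (simp add: nb)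
    then have bsum: "b summable_on UNIV" by (rule Infinite_Sum.abs_summable_summable)
    define Q where "Q n = (\<Sum>k\<in>{- int n..int n}. b k)" for n :: nat
    have Qlim: "Q \<longlonglongrightarrow> infsum b UNIV" unfolding Q_def
      by (rule has_sum_sym_lim) (use bsum in \<open>simp add: summable_iff_has_sum_infsum[symmetric]\<close>)
    have Tx: "T f N x = (\<Sum>n\<le>N. Q n)" for N
      by (simp add: T_def Q_def b_def a_def)
    have QQ: "norm (Q N - Q n) \<le> P N - P n" if "n \<le> N" for n N
    proof -
      have sub: "{- int n..int n} \<subseteq> {- int N..int N}" using that by auto
      have "Q N - Q n = (\<Sum>k\<in>{- int N..int N} - {- int n..int n}. b k)"
        unfolding Q_def by (rule sum_diff[OF _ sub, symmetric]) simp
      moreover have "P N - P n = (\<Sum>k\<in>{- int N..int N} - {- int n..int n}. a k)"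
        unfolding P_def by (rule sum_diff[OF _ sub, symmetric]) simp
      ultimately show ?thesis using norm_sum[of b] by (simp add: nb)
    qed
    have bnd: "norm (T f N x / complex_of_real (real (Suc N)) - Q N) \<le> P N - \<sigma> N" for N
    proof -
      have eqT: "T f N x / complex_of_real (real (Suc N)) - Q N = (\<Sum>n\<le>N. (Q n - Q N)) / complex_of_real (real (Suc N))"
      proof -
        define S where "S = complex_of_real (real (Suc N))"
        have S0: "S \<noteq> 0" unfolding S_def of_real_eq_0_iff by simp
        have "(\<Sum>n\<le>N. (Q n - Q N)) = (\<Sum>n\<le>N. Q n) - S * Q N"
          by (simp add: sum_subtractf S_def)
        then have "(\<Sum>n\<le>N. (Q n - Q N)) / S = (\<Sum>n\<le>N. Q n) / S - Q N"
          using S0 by (simp add: diff_divide_distrib)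
        then show ?thesis by (simp add: Tx S_def)
      qed
      have "norm (T f N x / complex_of_real (real (Suc N)) - Q N) = norm (\<Sum>n\<le>N. (Q n - Q N)) / real (Suc N)"
        unfolding eqT norm_divide norm_of_real by simp
      also have "\<dots> \<le> (\<Sum>n\<le>N. (P N - P n)) / real (Suc N)"
      proof (intro divide_right_mono)
        have "norm (\<Sum>n\<le>N. (Q n - Q N)) \<le> (\<Sum>n\<le>N. norm (Q n - Q N))" by (rule norm_sum)
        also have "\<dots> \<le> (\<Sum>n\<le>N. (P N - P n))"
          by (intro sum_mono) (metis QQ atMost_iff norm_minus_commute)
        finally show "norm (\<Sum>n\<le>N. (Q n - Q N)) \<le> (\<Sum>n\<le>N. (P N - P n))" .
      qed simp
      also have "\<dots> = P N - \<sigma> N"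
        by (simp add: \<sigma>_def sum_subtractf field_simps)
      finally show ?thesis .
    qed
    have "(\<lambda>N. P N - \<sigma> N) \<longlonglongrightarrow> 1 - 1" by (intro tendsto_intros Plim \<sigma>lim)
    then have lim0: "(\<lambda>N. P N - \<sigma> N) \<longlonglongrightarrow> 0" by simp
    have "(\<lambda>N. norm (T f N x / complex_of_real (real (Suc N)) - Q N)) \<longlonglongrightarrow> 0"
    proof (rule tendsto_sandwich[OF _ _ tendsto_const lim0])
      show "eventually (\<lambda>N. 0 \<le> norm (T f N x / complex_of_real (real (Suc N)) - Q N)) sequentially"
        by (intro always_eventually allI norm_ge_zero)
      show "eventually (\<lambda>N. norm (T f N x / complex_of_real (real (Suc N)) - Q N) \<le> P N - \<sigma> N) sequentially"
        by (intro always_eventually allI bnd)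
    qed
    then have d0: "(\<lambda>N. T f N x / complex_of_real (real (Suc N)) - Q N) \<longlonglongrightarrow> 0"
      by (simp add: tendsto_norm_zero_iff)
    have "(\<lambda>N. T f N x / complex_of_real (real (Suc N)) - (T f N x / complex_of_real (real (Suc N)) - Q N)) \<longlonglongrightarrow> 0 - 0"
      by (intro tendsto_diff Tx_lim[OF pd cf zD D0 x] d0)
    then have "Q \<longlonglongrightarrow> 0" by simp
    then have "infsum b UNIV = 0" using Qlim LIMSEQ_unique by blast
    then show ?thesis by (simp add: char_fun_int_def b_def[abs_def] a_def)
  qed
  show ?thesis using a0 hs xcase unfolding a_def by auto
qed


end
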